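(* Let $\mathcal M$ be a universally ex-post IC-IR single-item mechanism in an interdependent-values setting. Then under no-overbidding $\mathcal M$ is dominant-strategy incentive compatible: for every signal profile $\mathbf s$, every bid profile $\mathbf b$ with $\mathbf b\le\mathbf s$ coordinatewise, and every bidder $i$, $$\mathbb E\big[u_i((s_i,\mathbf b_{-i});\mathbf s)\big]\ge\mathbb E\big[u_i(\mathbf b;\mathbf s)\big],$$ where expectations are over the randomness of $\mathcal M$.
   Context: Single-item interdependent-values setting: bidders $i\in[n]$ have private signals $s_i\in S_i\subseteq\mathbb R_{\ge0}$ (intervals) and publicly known valuations $v_i:S_1\times\dots\times S_n\to\mathbb R_{\ge0}$, weakly increasing in every coordinate and strictly increasing in $s_i$. A deterministic mechanism $(x,p)$ solicits bids $b_i\in S_i$, outputs $x_i(\mathbf b)\in\{0,1\}$ with $\sum_ix_i(\mathbf b)\le1$ and payments $p_i(\mathbf b)$; utility $u_i(\mathbf b;\mathbf s)=x_i(\mathbf b)v_i(\mathbf s)-p_i(\mathbf b)$. It is ex-post IC-IR if for every $\mathbf s$, every $i$ and every $b_i\in S_i$: $x_i(\mathbf s)v_i(\mathbf s)-p_i(\mathbf s)\ge\max\{x_i(b_i,\mathbf s_{-i})v_i(\mathbf s)-p_i(b_i,\mathbf s_{-i}),0\}$. A randomized mechanism is universally ex-post IC-IR if it is a probability distribution over deterministic ex-post IC-IR mechanisms. *)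

theory Defs
  imports "HOL-Probability.Probability"
begin

definition profiles :: "('i \<Rightarrow> real set) \<Rightarrow> ('i \<Rightarrow> real) set" where
  "profiles S = {s. \<forall>i. s i \<in> S i}"

definition valid_setting ::
  "('i \<Rightarrow> real set) \<Rightarrow> ('i \<Rightarrow> ('i \<Rightarrow> real) \<Rightarrow> real) \<Rightarrow> bool" where
  "valid_setting S v \<longleftrightarrow>
     (\<forall>i. is_interval (S i) \<and> S i \<subseteq> {0..}) \<and>
     (\<forall>i. \<forall>s\<in>profiles S. v i s \<ge> 0) \<and>
     (\<forall>i j. \<forall>s\<in>profiles S. \<forall>t\<in>S j. s j \<le> t \<longrightarrow> v i s \<le> v i (s(j := t))) \<and>
     (\<forall>i. \<forall>s\<in>profiles S. \<forall>t\<in>S i. s i < t \<longrightarrow> v i s < v i (s(i := t)))"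

text \<open>A deterministic mechanism is a pair (x, p) of an allocation rule and a
payment rule, both mapping a bid profile and a bidder to a real number.\<close>

type_synonym 'i mechanism = "(('i \<Rightarrow> real) \<Rightarrow> 'i \<Rightarrow> real) \<times> (('i \<Rightarrow> real) \<Rightarrow> 'i \<Rightarrow> real)"

definition det_mechanism :: "('i::finite \<Rightarrow> real set) \<Rightarrow> 'i mechanism \<Rightarrow> bool" where
  "det_mechanism S M \<longleftrightarrow>
     (\<forall>b\<in>profiles S. (\<forall>i. fst M b i \<in> {0, 1}) \<and> (\<Sum>i\<in>UNIV. fst M b i) \<le> 1)"

definition utility ::
  "('i \<Rightarrow> ('i \<Rightarrow> real) \<Rightarrow> real) \<Rightarrow> 'i mechanism \<Rightarrow> 'i \<Rightarrow> ('i \<Rightarrow> real) \<Rightarrow> ('i \<Rightarrow> real) \<Rightarrow> real" where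
  "utility v M i b s = fst M b i * v i s - snd M b i"

definition expost_IC_IR ::
  "('i \<Rightarrow> real set) \<Rightarrow> ('i \<Rightarrow> ('i \<Rightarrow> real) \<Rightarrow> real) \<Rightarrow> 'i mechanism \<Rightarrow> bool" where
  "expost_IC_IR S v M \<longleftrightarrow>
     (\<forall>s\<in>profiles S. \<forall>i. \<forall>bi\<in>S i.
        utility v M i s s \<ge> max (utility v M i (s(i := bi)) s) 0)"

text \<open>A randomized mechanism: a family of mechanisms indexed by the sample
space of a probability space, almost every (here: every) realization being a
deterministic ex-post IC-IR mechanism.\<close>

definition universally_expost_IC_IR ::
  "('i::finite \<Rightarrow> real set) \<Rightarrow> ('i \<Rightarrow> ('i \<Rightarrow> real) \<Rightarrow> real) \<Rightarrow> 'w measure \<Rightarrow> ('w \<Rightarrow> 'i mechanism) \<Rightarrow> bool" where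
  "universally_expost_IC_IR S v P Mech \<longleftrightarrow>
     prob_space P \<and> (\<forall>\<omega>\<in>space P. det_mechanism S (Mech \<omega>) \<and> expost_IC_IR S v (Mech \<omega>))"

end

theory Submission
  imports Defs
begin

lemma v_mono_profile:
  fixes S :: "'i::finite \<Rightarrow> real set"
  assumes vs: "valid_setting S v" and s: "s \<in> profiles S" and t: "t \<in> profiles S"
    and le: "\<forall>j. t j \<le> s j"
  shows "v i t \<le> v i s"
proof -
  define f where "f A = (\<lambda>j. if j \<in> A then s j else t j)" for A
  have fp: "f A \<in> profiles S" for A using s t by (auto simp: f_def profiles_def)
  have "v i t \<le> v i (f A)" if "finite A" for A
    using that
  proof (induction A rule: finite_induct)
    case empty then show ?case by (simp add: f_def)
  next
    case (insert a A)
    have eq: "f (insert a A) = (f A)(a := s a)" by (auto simp: f_def)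
    have "f A a \<le> s a" using insert le by (simp add: f_def)
    moreover have "s a \<in> S a" using s by (simp add: profiles_def)
    ultimately have "v i (f A) \<le> v i ((f A)(a := s a))"
      using vs fp[of A] unfolding valid_setting_def by blast
    then show ?case using insert eq by (metis order_trans)
  qed
  from this[of UNIV] show ?thesis by (simp add: f_def)
qed

lemma pointwise:
  fixes S :: "'i::finite \<Rightarrow> real set"
  assumes vs: "valid_setting S v" and dm: "det_mechanism S M" and ic: "expost_IC_IR S v M"
    and s: "s \<in> profiles S" and b: "b \<in> profiles S" and le: "\<forall>j. b j \<le> s j"
  shows "utility v M i b s \<le> utility v M i (b(i := s i)) s"
proof (cases "b i = s i")
  case True
  then have "b(i := s i) = b" by auto
  then show ?thesis by simp
next
  case False
  define t where "t = b(i := s i)"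
  have lt: "b i < s i" using le False by (simp add: order_less_le)
  have t: "t \<in> profiles S" using s b by (auto simp: t_def profiles_def)
  have tb: "t(i := b i) = b" by (auto simp: t_def)
  have bt: "b(i := t i) = t" by (auto simp: t_def)
  have bi: "b i \<in> S i" "t i \<in> S i" using b t by (auto simp: profiles_def)
  have ic1: "utility v M i t t \<ge> utility v M i b t"
    using ic t bi unfolding expost_IC_IR_def by (metis max.bounded_iff tb)
  have ic2: "utility v M i b b \<ge> utility v M i t b"
    using ic b bi unfolding expost_IC_IR_def by (metis max.bounded_iff bt)
  have strict: "v i b < v i t"
    using vs b bi lt bt unfolding valid_setting_def t_def by (metis fun_upd_same)
  have xt: "fst M t i \<in> {0,1}" and xb: "fst M b i \<in> {0,1}"
    using dm t b unfolding det_mechanism_def by auto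
  have tle: "\<forall>j. t j \<le> s j" using le by (simp add: t_def)
  have vts: "v i t \<le> v i s" by (rule v_mono_profile[OF vs s t tle])
  show ?thesis
  proof (cases "fst M t i = 1")
    case True
    then show ?thesis using ic1 xb vts unfolding utility_def t_def[symmetric] by auto
  next
    case False
    then have x0: "fst M t i = 0" using xt by auto
    have "fst M b i = 0"
    proof (rule ccontr)
      assume "fst M b i \<noteq> 0"
      then have "fst M b i = 1" using xb by auto
      then show False using ic1 ic2 x0 strict unfolding utility_def by auto
    qed
    then show ?thesis using ic1 x0 unfolding utility_def t_def[symmetric] by auto
  qed
qed

theorem mainTheorem7:
  fixes S :: "'i::finite \<Rightarrow> real set"
    and v :: "'i \<Rightarrow> ('i \<Rightarrow> real) \<Rightarrow> real"
    and P :: "'w measure"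
    and Mech :: "'w \<Rightarrow> 'i mechanism"
    and s b :: "'i \<Rightarrow> real"
    and i :: 'i
  assumes "valid_setting S v"
    and "universally_expost_IC_IR S v P Mech"
    and "s \<in> profiles S" and "b \<in> profiles S"
    and "\<forall>j. b j \<le> s j"
    and "integrable P (\<lambda>\<omega>. utility v (Mech \<omega>) i (b(i := s i)) s)"
    and "integrable P (\<lambda>\<omega>. utility v (Mech \<omega>) i b s)"
  shows "(\<integral>\<omega>. utility v (Mech \<omega>) i (b(i := s i)) s \<partial>P)
           \<ge> (\<integral>\<omega>. utility v (Mech \<omega>) i b s \<partial>P)"
  using assms(7,6)
proof (rule integral_mono)
  fix \<omega> assume "\<omega> \<in> space P"
  then have "det_mechanism S (Mech \<omega>)" "expost_IC_IR S v (Mech \<omega>)"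
    using assms(2) unfolding universally_expost_IC_IR_def by auto
  then show "utility v (Mech \<omega>) i b s \<le> utility v (Mech \<omega>) i (b(i := s i)) s"
    using pointwise assms by blast
qed

end
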